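(* Let $\mathcal{A},\mathcal{B}\in\operatorname{Sym}(k,\mathbb{R})$ with $\mathcal{A}$ positive definite, let $\xi\in\mathbb{R}^k$, and put $f(x)={}^tx\mathcal{A}x-1$, $g(x)={}^tx\mathcal{B}x+\xi\cdot x-1$. Suppose that for all $x\in\mathbb{R}^k$, $f(x)\le0$ implies $g(x)\le0$. Then $\operatorname{tr}\mathcal{A}\ge\operatorname{tr}\mathcal{B}$; moreover, either $f=g$ or $\operatorname{tr}\mathcal{A}>\operatorname{tr}\mathcal{B}$. *)

theory Defs
  imports "HOL-Analysis.Analysis"
begin

definition sym_matrix :: "real^'k^'k \<Rightarrow> bool" where
  "sym_matrix M \<longleftrightarrow> transpose M = M"

definition pos_def_matrix :: "real^'k^'k \<Rightarrow> bool" where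
  "pos_def_matrix M \<longleftrightarrow> sym_matrix M \<and> (\<forall>x. x \<noteq> 0 \<longrightarrow> x \<bullet> (M *v x) > 0)"

end

theory Submission
  imports Defs
begin

lemma entry_form:
  fixes M :: "real^'k^'k"
  shows "axis i 1 \<bullet> (M *v axis j 1) = M$i$j"
  by (simp add: matrix_vector_mult_basis column_def inner_axis')

lemma sym_swap:
  fixes M :: "real^'k^'k"
  assumes "sym_matrix M"
  shows "x \<bullet> (M *v y) = y \<bullet> (M *v x)"
proof -
  have "x \<bullet> (M *v y) = (x v* M) \<bullet> y" by (simp add: dot_lmul_matrix)
  also have "x v* M = M *v x"
    using vector_transpose_matrix[of x M] assms unfolding sym_matrix_def by metis
  finally show ?thesis by (simp add: inner_commute)
qed

lemma scale_form:
  fixes M :: "real^'k^'k"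
  shows "(c *\<^sub>R x) \<bullet> (M *v (c *\<^sub>R x)) = c^2 * (x \<bullet> (M *v x))"
  by (simp add: matrix_vector_mult_scaleR power2_eq_square)

theorem lemma2p3:
  fixes A B :: "real^'k^'k" and \<xi> :: "real^'k"
    and f g :: "real^'k \<Rightarrow> real"
  assumes "sym_matrix A" and "sym_matrix B" and "pos_def_matrix A"
    and "\<And>x. f x = x \<bullet> (A *v x) - 1"
    and "\<And>x. g x = x \<bullet> (B *v x) + \<xi> \<bullet> x - 1"
    and "\<And>x. f x \<le> 0 \<Longrightarrow> g x \<le> 0"
  shows "trace A \<ge> trace B \<and> (f = g \<or> trace A > trace B)"
proof -
  have pd: "\<And>x. x \<noteq> 0 \<Longrightarrow> x \<bullet> (A *v x) > 0" using assms(3) by (simp add: pos_def_matrix_def)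
  have bd: "x \<bullet> (B *v x) \<le> x \<bullet> (A *v x) \<and> \<bar>\<xi> \<bullet> x\<bar> \<le> sqrt (x \<bullet> (A *v x)) * (1 - (x \<bullet> (B *v x)) / (x \<bullet> (A *v x)))"
    if "x \<noteq> 0" for x
  proof -
    define s where "s = x \<bullet> (A *v x)"
    have s: "s > 0" using pd[OF that] s_def by simp
    define y where "y = (1 / sqrt s) *\<^sub>R x"
    have yA: "y \<bullet> (A *v y) = 1"
      unfolding y_def scale_form using s by (simp add: s_def[symmetric] power_divide)
    have myA: "(-y) \<bullet> (A *v (-y)) = 1"
      using scale_form[of "-1" y A] yA by simp
    have "g y \<le> 0" using assms(6)[of y] assms(4)[of y] yA by simp
    hence g1: "y \<bullet> (B *v y) + \<xi> \<bullet> y \<le> 1" using assms(5)[of y] by simp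
    have "g (-y) \<le> 0" using assms(6)[of "-y"] assms(4)[of "-y"] myA by simp
    hence g2: "y \<bullet> (B *v y) - \<xi> \<bullet> y \<le> 1" using assms(5)[of "-y"] scale_form[of "-1" y B] by simp
    have yB: "y \<bullet> (B *v y) \<le> 1" using g1 g2 by linarith
    have xy: "x = sqrt s *\<^sub>R y" using s by (simp add: y_def)
    have "x \<bullet> (B *v x) = s * (y \<bullet> (B *v y))"
      using scale_form[of "sqrt s" y B] xy s by simp
    also have "\<dots> \<le> s" using yB s by simp
    finally have c1: "x \<bullet> (B *v x) \<le> x \<bullet> (A *v x)" by (simp add: s_def)
    have "\<xi> \<bullet> x = sqrt s * (\<xi> \<bullet> y)" using xy by simp
    moreover have "\<bar>\<xi> \<bullet> y\<bar> \<le> 1 - y \<bullet> (B *v y)" using g1 g2 by linarith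
    ultimately have "\<bar>\<xi> \<bullet> x\<bar> \<le> sqrt s * (1 - y \<bullet> (B *v y))"
      using s by (simp add: abs_mult mult_left_mono)
    moreover have "y \<bullet> (B *v y) = (x \<bullet> (B *v x)) / s"
      unfolding y_def scale_form using s by (simp add: power_divide)
    ultimately show ?thesis using c1 by (simp add: s_def)
  qed
  have psd: "x \<bullet> (B *v x) \<le> x \<bullet> (A *v x)" for x
    using bd[of x] by (cases "x = 0") auto
  have diag: "B$i$i \<le> A$i$i" for i
    using psd[of "axis i 1"] by (simp add: entry_form)
  have tr: "trace B \<le> trace A" unfolding trace_def by (rule sum_mono) (use diag in auto)
  show ?thesis
  proof (cases "trace A > trace B")
    case True then show ?thesis using tr by simp
  next
    case False
    hence "trace A = trace B" using tr by simp
    hence "(\<Sum>i\<in>UNIV. A$i$i - B$i$i) = 0" unfolding trace_def by (simp add: sum_subtractf)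
    hence d0: "A$i$i = B$i$i" for i
      using sum_nonneg_eq_0_iff[of UNIV "\<lambda>i. A$i$i - B$i$i"] diag by force
    define C where "C = A - B"
    have Csym: "x \<bullet> (C *v y) = y \<bullet> (C *v x)" for x y
      using sym_swap[OF assms(1)] sym_swap[OF assms(2)] by (simp add: C_def matrix_vector_mult_diff_rdistrib inner_diff_right)
    have Cpsd: "x \<bullet> (C *v x) \<ge> 0" for x
      using psd[of x] by (simp add: C_def matrix_vector_mult_diff_rdistrib inner_diff_right)
    have Cd: "C$i$i = 0" for i using d0[of i] by (simp add: C_def)
    have Cij: "C$i$j = 0" for i j
    proof -
      let ?a = "axis i (1::real) :: real^'k" and ?b = "axis j (1::real) :: real^'k"
      have e: "(?a + t *\<^sub>R ?b) \<bullet> (C *v (?a + t *\<^sub>R ?b)) = 2 * t * C$i$j" for t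
      proof -
        have "(?a + t *\<^sub>R ?b) \<bullet> (C *v (?a + t *\<^sub>R ?b)) =
          ?a \<bullet> (C *v ?a) + t * (?a \<bullet> (C *v ?b)) + t * (?b \<bullet> (C *v ?a)) + t*t * (?b \<bullet> (C *v ?b))"
          by (simp add: matrix_vector_right_distrib matrix_vector_mult_scaleR inner_add_left inner_add_right algebra_simps)
        also have "\<dots> = 2 * t * C$i$j"
          using Csym[of ?b ?a] by (simp add: entry_form Cd)
        finally show ?thesis .
      qed
      have "0 \<le> 2 * 1 * C$i$j" using Cpsd e[of 1] by metis
      moreover have "0 \<le> 2 * (-1) * C$i$j" using Cpsd e[of "-1"] by metis
      ultimately show ?thesis by linarith
    qed
    have "C = 0" by (simp add: vec_eq_iff Cij)
    hence AB: "A = B" by (simp add: C_def)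
    have xi: "\<xi> = 0"
    proof (rule ccontr)
      assume "\<xi> \<noteq> 0"
      from bd[OF this] AB have "\<bar>\<xi> \<bullet> \<xi>\<bar> \<le> 0"
        using pd[OF \<open>\<xi> \<noteq> 0\<close>] by simp
      thus False using \<open>\<xi> \<noteq> 0\<close> inner_gt_zero_iff[of \<xi>] by linarith
    qed
    have "f = g" by (rule ext) (simp add: assms(4,5) AB xi)
    thus ?thesis using tr by simp
  qed
qed

end
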